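(* Let $W$ be a weakly symmetric discrete memoryless channel with input alphabet $\mathbb{F}_q$, let $\mu=\mathbb{E}(\|\pi\|^2)$, and suppose the all-zero word of length $n$ is sent through $n$ independent uses of $W$, with resulting reliability matrix $\Pi$. Then for every $\epsilon>0$, $$\mathrm{prob}\big(\langle\Pi,\lfloor\mathbf{0}\rfloor\rangle\le(1-\epsilon)\mu n\big)\le e^{-2n\mu^2\epsilon^2},\qquad \mathrm{prob}\big(\langle\Pi,\Pi\rangle\ge(1+\epsilon)n\mu\big)\le e^{-2n\mu^2\epsilon^2}.$$
   Context: A discrete memoryless channel with transition probabilities $W(y|x)$ is weakly symmetric if its output alphabet admits a partition $Y_1\cup\dots\cup Y_r$ such that each submatrix $(W(y|x))_{x\in\mathbb{F}_q,y\in Y_i}$ has all rows permutations of each other and all columns permutations of each other. The input is assumed uniform on $\mathbb{F}_q$; the APP vector of output $y$ is $\pi_y=(\mathrm{prob}(x=\alpha|y))_{\alpha\in\mathbb{F}_q}$ and $\|\pi\|^2=\sum_\alpha\pi(\alpha)^2$; $\mathbb{E}(\|\pi\|^2)$ is the expectation over the channel output. For received $\mathbf{y}=(y_1,\dots,y_n)$, the reliability matrix $\Pi$ is the $q\times n$ matrix with $j$-th column $\pi_{y_j}$. $\lfloor\mathbf{0}\rfloor$ is the $q\times n$ 0/1 matrix with ones exactly in row $0$; $\langle A,B\rangle=\sum_{i,j}a_{ij}b_{ij}$. *)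

theory Defs
  imports "HOL-Probability.Probability"
begin

definition chanW :: "('a \<Rightarrow> 'b pmf) \<Rightarrow> 'b \<Rightarrow> 'a \<Rightarrow> real" where
  "chanW W y x = pmf (W x) y"

definition weakly_symmetric :: "('a::finite \<Rightarrow> 'b::finite pmf) \<Rightarrow> bool" where
  "weakly_symmetric W \<longleftrightarrow>
     (\<exists>P. (\<forall>B\<in>P. B \<noteq> {}) \<and> \<Union>P = (UNIV :: 'b set) \<and>
          (\<forall>B1\<in>P. \<forall>B2\<in>P. B1 \<noteq> B2 \<longrightarrow> B1 \<inter> B2 = {}) \<and>
          (\<forall>B\<in>P.
             (\<forall>x x'. \<exists>\<sigma>. bij_betw \<sigma> B B \<and> (\<forall>y\<in>B. chanW W (\<sigma> y) x = chanW W y x')) \<and>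
             (\<forall>y\<in>B. \<forall>y'\<in>B. \<exists>\<tau>. bij \<tau> \<and> (\<forall>x. chanW W y (\<tau> x) = chanW W y' x))))"

definition joint :: "('a::finite \<Rightarrow> 'b pmf) \<Rightarrow> ('a \<times> 'b) pmf" where
  "joint W = do { x \<leftarrow> pmf_of_set UNIV; y \<leftarrow> W x; return_pmf (x, y) }"

definition app :: "('a::finite \<Rightarrow> 'b pmf) \<Rightarrow> 'b \<Rightarrow> 'a \<Rightarrow> real" where
  "app W y \<alpha> = measure_pmf.prob (joint W) {(\<alpha>, y)} / measure_pmf.prob (joint W) (UNIV \<times> {y})"

definition sqnorm :: "('a::finite \<Rightarrow> real) \<Rightarrow> real" where
  "sqnorm \<pi> = (\<Sum>\<alpha>\<in>UNIV. (\<pi> \<alpha>)^2)"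

definition mu :: "('a::finite \<Rightarrow> 'b pmf) \<Rightarrow> real" where
  "mu W = measure_pmf.expectation (joint W) (\<lambda>(x, y). sqnorm (app W y))"

text \<open>q x n matrices are functions 'a => nat => real (column index j < n).\<close>

definition rel_matrix :: "('a::finite \<Rightarrow> 'b pmf) \<Rightarrow> (nat \<Rightarrow> 'b) \<Rightarrow> 'a \<Rightarrow> nat \<Rightarrow> real" where
  "rel_matrix W ys = (\<lambda>\<alpha> j. app W (ys j) \<alpha>)"

definition zero_floor :: "'a::zero \<Rightarrow> nat \<Rightarrow> real" where
  "zero_floor = (\<lambda>\<alpha> j. if \<alpha> = 0 then 1 else 0)"

definition frob :: "nat \<Rightarrow> ('a::finite \<Rightarrow> nat \<Rightarrow> real) \<Rightarrow> ('a \<Rightarrow> nat \<Rightarrow> real) \<Rightarrow> real" where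
  "frob n A B = (\<Sum>\<alpha>\<in>UNIV. \<Sum>j<n. A \<alpha> j * B \<alpha> j)"

definition out_dist :: "('a::zero \<Rightarrow> 'b pmf) \<Rightarrow> nat \<Rightarrow> (nat \<Rightarrow> 'b) pmf" where
  "out_dist W n = Pi_pmf {..<n} undefined (\<lambda>_. W 0)"

end

theory Submission
  imports Defs
begin

definition colperm :: "('a::finite \<Rightarrow> 'b pmf) \<Rightarrow> 'b \<Rightarrow> 'b \<Rightarrow> bool" where
  "colperm W y y' \<longleftrightarrow> (\<exists>\<tau>. bij \<tau> \<and> (\<forall>x. chanW W y (\<tau> x) = chanW W y' x))"

definition ssum :: "('a::finite \<Rightarrow> 'b pmf) \<Rightarrow> 'b \<Rightarrow> real" where
  "ssum W y = (\<Sum>a\<in>UNIV. chanW W y a)"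

lemma pmf_joint:
  fixes W :: "'a::finite \<Rightarrow> 'b pmf"
  shows "pmf (joint W) (a, y) = chanW W y a / real CARD('a)"
proof -
  have "joint W = pmf_of_set UNIV \<bind> (\<lambda>x. map_pmf (Pair x) (W x))"
    unfolding joint_def map_pmf_def by simp
  then have "pmf (joint W) (a, y) = (\<integral>x. pmf (map_pmf (Pair x) (W x)) (a, y) \<partial>measure_pmf (pmf_of_set UNIV))"
    by (simp add: pmf_bind)
  also have "\<dots> = (\<Sum>x\<in>UNIV. pmf (map_pmf (Pair x) (W x)) (a, y)) / real CARD('a)"
    by (simp add: integral_pmf_of_set)
  also have "(\<Sum>x\<in>UNIV. pmf (map_pmf (Pair x) (W x)) (a, y)) = (\<Sum>x\<in>UNIV. if x = a then chanW W y a else 0)"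
  proof (intro sum.cong refl)
    fix x :: 'a
    show "pmf (map_pmf (Pair x) (W x)) (a, y) = (if x = a then chanW W y a else 0)"
    proof (cases "x = a")
      case True
      then show ?thesis by (simp add: chanW_def pmf_map_inj' inj_on_def)
    next
      case False
      then show ?thesis by (auto simp: pmf_eq_0_set_pmf)
    qed
  qed
  finally show ?thesis by simp
qed

lemma app_eq:
  fixes W :: "'a::finite \<Rightarrow> 'b::finite pmf"
  shows "app W y \<alpha> = chanW W y \<alpha> / ssum W y"
proof -
  have q: "real CARD('a) > 0" by simp
  have "measure_pmf.prob (joint W) (UNIV \<times> {y}) = (\<Sum>a\<in>UNIV. pmf (joint W) (a, y))"
  proof -
    have u: "UNIV \<times> {y} = (\<lambda>a. (a, y)) ` (UNIV :: 'a set)" by auto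
    have "sum (pmf (joint W)) ((\<lambda>a. (a, y)) ` (UNIV :: 'a set)) = (\<Sum>a\<in>UNIV. pmf (joint W) (a, y))"
      by (subst sum.reindex) (auto simp: inj_on_def)
    then show ?thesis by (simp add: measure_measure_pmf_finite u)
  qed
  also have "\<dots> = ssum W y / real CARD('a::finite)"
    by (simp add: pmf_joint ssum_def sum_divide_distrib)
  finally have d: "measure_pmf.prob (joint W) (UNIV \<times> {y}) = ssum W y / real CARD('a::finite)" .
  show ?thesis unfolding app_def measure_pmf_single d pmf_joint using q
    by (simp add: field_simps)
qed

lemma ssum_colperm:
  fixes W :: "'a::finite \<Rightarrow> 'b::finite pmf"
  shows "colperm W y y' \<Longrightarrow> ssum W y = ssum W y'"
proof -
  assume "colperm W y y'"
  then obtain \<tau> where b: "bij \<tau>" and e: "\<And>x. chanW W y (\<tau> x) = chanW W y' x"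
    unfolding colperm_def by blast
  have "ssum W y' = (\<Sum>x\<in>UNIV. chanW W y (\<tau> x))" by (simp add: ssum_def e)
  also have "\<dots> = ssum W y" unfolding ssum_def by (rule sum.reindex_bij_betw[OF b])
  finally show ?thesis by simp
qed

lemma sq_colperm:
  fixes W :: "'a::finite \<Rightarrow> 'b::finite pmf"
  shows "colperm W y y' \<Longrightarrow> sqnorm (app W y) = sqnorm (app W y')"
proof -
  assume c: "colperm W y y'"
  then obtain \<tau> where b: "bij \<tau>" and e: "\<And>x. chanW W y (\<tau> x) = chanW W y' x"
    unfolding colperm_def by blast
  have ss: "ssum W y' = ssum W y" using ssum_colperm[OF c] by simp
  have "sqnorm (app W y') = (\<Sum>x\<in>UNIV. (chanW W y' x / ssum W y')^2)"
    by (simp only: sqnorm_def app_eq)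
  also have "\<dots> = (\<Sum>x\<in>UNIV. (chanW W y (\<tau> x) / ssum W y)^2)"
    by (simp only: e ss)
  also have "\<dots> = (\<Sum>x\<in>UNIV. (chanW W y x / ssum W y)^2)"
    by (rule sum.reindex_bij_betw[OF b, where g = "\<lambda>x. (chanW W y x / ssum W y)^2"])
  also have "\<dots> = sqnorm (app W y)"
    by (simp only: sqnorm_def app_eq)
  finally show ?thesis by (rule sym)
qed

lemma ws_sum:
  fixes W :: "'a::finite \<Rightarrow> 'b::finite pmf" and f :: "real \<Rightarrow> 'b \<Rightarrow> real"
  assumes ws: "weakly_symmetric W" and fc: "\<And>v y y'. colperm W y y' \<Longrightarrow> f v y = f v y'"
  shows "(\<Sum>y\<in>UNIV. f (chanW W y x) y) = (\<Sum>y\<in>UNIV. f (chanW W y x') y)"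
proof -
  obtain P where ne: "\<forall>B\<in>P. B \<noteq> {}" and un: "\<Union>P = (UNIV :: 'b set)"
     and dj: "\<forall>B1\<in>P. \<forall>B2\<in>P. B1 \<noteq> B2 \<longrightarrow> B1 \<inter> B2 = {}"
     and bl: "\<forall>B\<in>P.
             (\<forall>x x'. \<exists>\<sigma>. bij_betw \<sigma> B B \<and> (\<forall>y\<in>B. chanW W (\<sigma> y) x = chanW W y x')) \<and>
             (\<forall>y\<in>B. \<forall>y'\<in>B. \<exists>\<tau>. bij \<tau> \<and> (\<forall>x. chanW W y (\<tau> x) = chanW W y' x))"
    using ws unfolding weakly_symmetric_def by (elim exE conjE) (rule that)
  have finP: "finite P" by (rule finite_subset[of _ UNIV]) simp_all
  have pd: "pairwise disjnt P" using dj unfolding pairwise_def disjnt_def by blast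
  have blk: "(\<Sum>y\<in>B. f (chanW W y x) y) = (\<Sum>y\<in>B. f (chanW W y x') y)" if B: "B \<in> P" for B
  proof -
    have rc: "(\<forall>x x'. \<exists>\<sigma>. bij_betw \<sigma> B B \<and> (\<forall>y\<in>B. chanW W (\<sigma> y) x = chanW W y x')) \<and>
             (\<forall>y\<in>B. \<forall>y'\<in>B. \<exists>\<tau>. bij \<tau> \<and> (\<forall>x. chanW W y (\<tau> x) = chanW W y' x))"
      using bl B by (rule bspec)
    from conjunct1[OF rc, rule_format, of x x'] obtain \<sigma> where sb: "bij_betw \<sigma> B B"
      and se: "\<And>y. y \<in> B \<Longrightarrow> chanW W (\<sigma> y) x = chanW W y x'"
      by blast
    have "(\<Sum>y\<in>B. f (chanW W y x') y) = (\<Sum>y\<in>B. f (chanW W (\<sigma> y) x) (\<sigma> y))"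
    proof (intro sum.cong refl)
      fix y assume y: "y \<in> B"
      then have sy: "\<sigma> y \<in> B" using sb bij_betwE by blast
      have "colperm W y (\<sigma> y)" unfolding colperm_def using conjunct2[OF rc] y sy by blast
      then show "f (chanW W y x') y = f (chanW W (\<sigma> y) x) (\<sigma> y)" using fc se[OF y] by metis
    qed
    also have "\<dots> = (\<Sum>y\<in>B. f (chanW W y x) y)"
      by (rule sum.reindex_bij_betw[OF sb, where g = "\<lambda>y. f (chanW W y x) y"])
    finally show ?thesis by simp
  qed
  have U: "sum g (UNIV :: 'b set) = (\<Sum>B\<in>P. sum g B)" for g
    unfolding un[symmetric] using sum.Union_disjoint[of P g] dj by (simp add: o_def)
  have "(\<Sum>y\<in>UNIV. f (chanW W y x) y) = (\<Sum>B\<in>P. \<Sum>y\<in>B. f (chanW W y x) y)"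
    by (rule U)
  also have "\<dots> = (\<Sum>B\<in>P. \<Sum>y\<in>B. f (chanW W y x') y)" using blk by (rule sum.cong[OF refl])
  also have "\<dots> = (\<Sum>y\<in>UNIV. f (chanW W y x') y)"
    by (rule U[symmetric])
  finally show ?thesis .
qed

lemma mu_eq:
  fixes W :: "'a::finite \<Rightarrow> 'b::finite pmf"
  shows "mu W = (\<Sum>x\<in>UNIV. \<Sum>y\<in>UNIV. chanW W y x * sqnorm (app W y)) / real CARD('a)"
proof -
  have "mu W = (\<Sum>z\<in>UNIV. (case z of (x, y) \<Rightarrow> sqnorm (app W y)) * pmf (joint W) z)"
    unfolding mu_def by (rule integral_measure_pmf_real) auto
  also have "\<dots> = (\<Sum>x\<in>UNIV. \<Sum>y\<in>UNIV. sqnorm (app W y) * pmf (joint W) (x, y))"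
    by (simp only: sum.cartesian_product) (auto intro!: sum.cong)
  also have "\<dots> = (\<Sum>x\<in>UNIV. \<Sum>y\<in>UNIV. chanW W y x * sqnorm (app W y)) / real CARD('a)"
    by (simp add: pmf_joint sum_divide_distrib mult.commute)
  finally show ?thesis .
qed

lemma app_01:
  fixes W :: "'a::finite \<Rightarrow> 'b::finite pmf"
  shows "app W y a \<in> {0..1}"
proof -
  have w0: "chanW W y b \<ge> 0" for b by (simp add: chanW_def)
  have "chanW W y a \<le> ssum W y" unfolding ssum_def
    by (rule member_le_sum) (auto simp: w0)
  then show ?thesis using w0[of a] unfolding app_eq
    by (cases "ssum W y = 0") (auto simp: divide_le_eq_1)
qed

lemma sqnorm_01:
  fixes W :: "'a::finite \<Rightarrow> 'b::finite pmf"
  shows "sqnorm (app W y) \<in> {0..1}"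
proof -
  have "sqnorm (app W y) \<le> (\<Sum>a\<in>UNIV. app W y a)" unfolding sqnorm_def
  proof (rule sum_mono)
    fix a show "(app W y a)^2 \<le> app W y a" using app_01[of W y a]
      by (auto simp: power2_eq_square intro: mult_left_le)
  qed
  also have "(\<Sum>a\<in>UNIV. app W y a) = ssum W y / ssum W y"
    unfolding app_eq by (simp add: ssum_def sum_divide_distrib[symmetric])
  also have "\<dots> \<le> 1" by (cases "ssum W y = 0") auto
  finally show ?thesis by (auto simp: sqnorm_def intro: sum_nonneg)
qed

lemma frob1: "frob n (rel_matrix W ys) zero_floor = (\<Sum>j<n. app W (ys j) (0::'a::{finite,zero}))"
  unfolding frob_def rel_matrix_def zero_floor_def
  by (subst sum.swap) (simp add: if_distrib cong: if_cong)

lemma frob2: "frob n (rel_matrix W ys) (rel_matrix W ys) = (\<Sum>j<n. sqnorm (app W (ys j)))"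
  unfolding frob_def rel_matrix_def sqnorm_def
  by (subst sum.swap) (simp add: power2_eq_square)

lemma expect_fin:
  fixes p :: "'b::finite pmf"
  shows "measure_pmf.expectation p g = (\<Sum>y\<in>UNIV. g y * pmf p y)"
  by (rule integral_measure_pmf_real) auto

lemma key_means:
  fixes W :: "'a::{finite,zero} \<Rightarrow> 'b::finite pmf"
  assumes ws: "weakly_symmetric W"
  shows "measure_pmf.expectation (W 0) (\<lambda>y. app W y 0) = mu W"
    and "measure_pmf.expectation (W 0) (\<lambda>y. sqnorm (app W y)) = mu W"
proof -
  define F where "F x = (\<Sum>y\<in>UNIV. chanW W y x * (chanW W y x / ssum W y))" for x
  define G where "G x = (\<Sum>y\<in>UNIV. chanW W y x * sqnorm (app W y))" for x
  have Fc: "F x = F 0" for x unfolding F_def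
    by (rule ws_sum[OF ws, where f = "\<lambda>v y. v * (v / ssum W y)"]) (simp add: ssum_colperm)
  have Gc: "G x = G 0" for x unfolding G_def
    by (rule ws_sum[OF ws, where f = "\<lambda>v y. v * sqnorm (app W y)"]) (simp add: sq_colperm)
  have q: "real CARD('a) > 0" by simp
  have sG: "(\<Sum>x\<in>UNIV. G x) = real CARD('a) * G 0"
  proof -
    have "(\<Sum>x\<in>UNIV. G x) = (\<Sum>x\<in>(UNIV::'a set). G 0)" by (rule sum.cong) (auto intro: Gc)
    then show ?thesis by simp
  qed
  have sF: "(\<Sum>x\<in>UNIV. F x) = real CARD('a) * F 0"
  proof -
    have "(\<Sum>x\<in>UNIV. F x) = (\<Sum>x\<in>(UNIV::'a set). F 0)" by (rule sum.cong) (auto intro: Fc)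
    then show ?thesis by simp
  qed
  have muG: "mu W = G 0"
    using q unfolding mu_eq G_def[symmetric] sG by simp
  have pt: "ssum W y * sqnorm (app W y) = (\<Sum>x\<in>UNIV. chanW W y x * (chanW W y x / ssum W y))" for y
  proof -
    have "ssum W y * sqnorm (app W y) = (\<Sum>x\<in>UNIV. ssum W y * (chanW W y x / ssum W y)^2)"
      by (simp add: sqnorm_def app_eq sum_distrib_left)
    also have "\<dots> = (\<Sum>x\<in>UNIV. chanW W y x * (chanW W y x / ssum W y))"
      by (rule sum.cong) (auto simp: power2_eq_square)
    finally show ?thesis .
  qed
  have "(\<Sum>x\<in>UNIV. G x) = (\<Sum>x\<in>UNIV. F x)"
  proof -
    have "(\<Sum>x\<in>UNIV. G x) = (\<Sum>y\<in>UNIV. ssum W y * sqnorm (app W y))"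
      unfolding G_def ssum_def by (subst sum.swap) (simp add: sum_distrib_right)
    also have "\<dots> = (\<Sum>x\<in>UNIV. F x)" unfolding pt F_def by (rule sum.swap)
    finally show ?thesis .
  qed
  then have "real CARD('a) * G 0 = real CARD('a) * F 0" by (simp only: sG sF)
  then have muF: "mu W = F 0" using q muG by simp
  show "measure_pmf.expectation (W 0) (\<lambda>y. app W y 0) = mu W"
    unfolding muF F_def expect_fin by (simp add: app_eq chanW_def mult.commute)
  show "measure_pmf.expectation (W 0) (\<lambda>y. sqnorm (app W y)) = mu W"
    unfolding muG G_def expect_fin by (simp add: chanW_def mult.commute)
qed

lemma hoeff_pmf:
  fixes p :: "'b pmf" and g :: "'b \<Rightarrow> real" and n :: nat and t :: real
  assumes g01: "\<And>y. g y \<in> {0..1}" and n: "n > 0" and t: "t \<ge> 0"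
  shows "measure_pmf.prob (Pi_pmf {..<n} d (\<lambda>_. p)) {ys. (\<Sum>i<n. g (ys i)) \<le> real n * measure_pmf.expectation p g - t} \<le> exp (-2*t^2/n)"
   and  "measure_pmf.prob (Pi_pmf {..<n} d (\<lambda>_. p)) {ys. (\<Sum>i<n. g (ys i)) \<ge> real n * measure_pmf.expectation p g + t} \<le> exp (-2*t^2/n)"
proof -
  define M where "M = Pi_pmf {..<n} d (\<lambda>_. p)"
  have comp: "map_pmf (\<lambda>f. f i) M = p" if "i < n" for i
    unfolding M_def using that by (subst Pi_pmf_component) auto
  have dist: "distr (measure_pmf M) borel (\<lambda>ys. g (ys i)) = distr (measure_pmf p) borel g" if "i < n" for i
  proof -
    have "distr (measure_pmf M) borel (\<lambda>ys. g (ys i)) =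
        distr (measure_pmf (map_pmf (\<lambda>f. f i) M)) borel g"
      unfolding map_pmf_rep_eq by (subst distr_distr) (auto simp: o_def)
    then show ?thesis using comp[OF that] by simp
  qed
  have E: "measure_pmf.expectation M (\<lambda>ys. g (ys 0)) = measure_pmf.expectation p g"
  proof -
    have "measure_pmf.expectation M (\<lambda>ys. g (ys 0)) = measure_pmf.expectation (map_pmf (\<lambda>f. f 0) M) g"
      by simp
    also have "map_pmf (\<lambda>f. f 0) M = p" using comp n by simp
    finally show ?thesis .
  qed
  interpret Hoeffding_ineq_iid "measure_pmf M" "{..<n}" "\<lambda>i ys. g (ys i)" "\<lambda>ys. g (ys 0)" 0 1
     "measure_pmf.expectation M (\<lambda>ys. g (ys 0))"
  proof unfold_locales
    show "prob_space.indep_vars (measure_pmf M) (\<lambda>_. borel) (\<lambda>i ys. g (ys i)) {..<n}"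
      unfolding M_def
      by (intro prob_space.indep_vars_compose2[OF _ indep_vars_Pi_pmf])
         (auto simp: measure_pmf.prob_space_axioms)
  next
    fix i assume "i \<in> {..<n}"
    then show "distr (measure_pmf M) borel (\<lambda>ys. g (ys i)) = distr (measure_pmf M) borel (\<lambda>ys. g (ys 0))"
      using dist[of i] dist[of 0] n by simp
  qed (use g01 in auto)
  have ne: "{..<n} \<noteq> {}" using n by auto
  show "measure_pmf.prob (Pi_pmf {..<n} d (\<lambda>_. p)) {ys. (\<Sum>i<n. g (ys i)) \<le> real n * measure_pmf.expectation p g - t} \<le> exp (-2*t^2/n)"
    using Hoeffding_ineq_le[OF t _ ne] E by (simp add: M_def[symmetric])
  show "measure_pmf.prob (Pi_pmf {..<n} d (\<lambda>_. p)) {ys. (\<Sum>i<n. g (ys i)) \<ge> real n * measure_pmf.expectation p g + t} \<le> exp (-2*t^2/n)"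
    using Hoeffding_ineq_ge[OF t _ ne] E by (simp add: M_def[symmetric])
qed


theorem lemma2:
  fixes W :: "'a::{field,finite} \<Rightarrow> 'b::finite pmf" and n :: nat and \<epsilon> :: real
  assumes "weakly_symmetric W" and "\<epsilon> > 0"
  shows "measure_pmf.prob (out_dist W n)
           {ys. frob n (rel_matrix W ys) zero_floor \<le> (1 - \<epsilon>) * mu W * real n}
           \<le> exp (- 2 * real n * (mu W)^2 * \<epsilon>^2)
       \<and> measure_pmf.prob (out_dist W n)
           {ys. frob n (rel_matrix W ys) (rel_matrix W ys) \<ge> (1 + \<epsilon>) * real n * mu W}
           \<le> exp (- 2 * real n * (mu W)^2 * \<epsilon>^2)"
proof (cases "n = 0")
  case True
  then show ?thesis by (simp add: measure_pmf.prob_le_1)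
next
  case False
  then have n: "n > 0" by simp
  have mu0: "mu W \<ge> 0" unfolding mu_def
    by (rule Bochner_Integration.integral_nonneg) (use sqnorm_01 in \<open>auto split: prod.splits\<close>)
  define t where "t = \<epsilon> * mu W * real n"
  have t: "t \<ge> 0" unfolding t_def using mu0 assms(2) by simp
  have ex: "- 2 * t^2 / real n = - 2 * real n * (mu W)^2 * \<epsilon>^2"
    unfolding t_def using n by (simp add: power2_eq_square field_simps)
  note h1 = hoeff_pmf(1)[of "\<lambda>y. app W y 0" n t undefined "W 0", OF app_01 n t]
  note h2 = hoeff_pmf(2)[of "\<lambda>y. sqnorm (app W y)" n t undefined "W 0", OF sqnorm_01 n t]
  have s1: "{ys. frob n (rel_matrix W ys) zero_floor \<le> (1 - \<epsilon>) * mu W * real n}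
     = {ys. (\<Sum>i<n. app W (ys i) 0) \<le> real n * measure_pmf.expectation (W 0) (\<lambda>y. app W y 0) - t}"
    unfolding frob1 key_means(1)[OF assms(1)] t_def by (auto simp: algebra_simps)
  have s2: "{ys. frob n (rel_matrix W ys) (rel_matrix W ys) \<ge> (1 + \<epsilon>) * real n * mu W}
     = {ys. (\<Sum>i<n. sqnorm (app W (ys i))) \<ge> real n * measure_pmf.expectation (W 0) (\<lambda>y. sqnorm (app W y)) + t}"
    unfolding frob2 key_means(2)[OF assms(1)] t_def by (auto simp: algebra_simps)
  show ?thesis unfolding out_dist_def s1 s2 using h1 h2 ex by simp
qed

end
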